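(* Let $(X_B,X_C,X_R)$ be an OCC of a graph $G$, let $f_X$ be a proper $2$-coloring of $G[X_B]$, let $B^\ast \subseteq X_B$ satisfy property $(\star)$, and let $G'$ be the reduced graph. If $S'$ is a minimum-size odd cycle transversal of $G'$, then $S' \subseteq V(G) \cap V(G')$ and $S'$ is a minimum-size odd cycle transversal of $G$.
   Context: An odd cycle transversal (OCT) of a graph is a vertex set whose removal leaves a bipartite graph. An odd cycle cut (OCC) of $G$ is a partition $(X_B, X_C, X_R)$ of $V(G)$ such that $G[X_B]$ is bipartite, there is no edge between $X_B$ and $X_R$, and $X_B \cup X_C \neq \emptyset$. Auxiliary graph: $G_{\mathrm{aux}}$ is obtained from a copy of $G[X_B]$ by adding, for each $v \in X_C$, new vertices $v^{(0)}, v^{(1)}$ and, for each $u \in N_G(v) \cap X_B$, the edge $v^{(f_X(u))}u$; $T := \{v^{(i)} : v \in X_C, i \in \{0,1\}\}$. Property $(\star)$ of $B^\ast \subseteq X_B$: for every partition $(T_1,T_2,T_3,T_X)$ of $T$ into four possibly empty parts, if there exists $S \subseteq X_B$ with $|S| \le |T|$ separating $T_i$ and $T_j$ (no connected component of $G_{\mathrm{aux}} - T_X - S$ meets both) for all $1 \le i < j \le 3$, then $B^\ast$ contains such a set $S$ of minimum possible size. Reduced graph $G'$: start from $G - (X_B \setminus B^\ast)$; then, for every unordered pair $\{u,v\}$ of (not necessarily distinct) vertices of $X_C \cup B^\ast$ and every parity $p \in \{\text{even},\text{odd}\}$ such that $G$ contains a $(u,v)$-walk of length of parity $p$ that has at least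 one internal vertex and all of whose internal vertices lie in $X_B \setminus B^\ast$: if $p$ is even, add two new vertices $x, x'$, each adjacent to exactly $u$ and $v$; if $p$ is odd, add four new vertices $x,y,x',y'$ and the edges $ux, xy, yv, ux', x'y', y'v$. All added vertices are distinct and new. *)

theory Defs
  imports Main
begin

type_synonym 'a graph = "'a set \<times> 'a set set"

definition graph :: "'a graph \<Rightarrow> bool" where
  "graph G \<longleftrightarrow> finite (fst G) \<and>
     (\<forall>e\<in>snd G. \<exists>u v. u \<noteq> v \<and> e = {u, v} \<and> u \<in> fst G \<and> v \<in> fst G)"

definition bipartite_on :: "'a graph \<Rightarrow> 'a set \<Rightarrow> bool" where
  "bipartite_on G W \<longleftrightarrow>
     (\<exists>c :: 'a \<Rightarrow> bool. \<forall>u\<in>W. \<forall>v\<in>W. {u, v} \<in> snd G \<longrightarrow> c u \<noteq> c v)"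

definition is_oct :: "'a graph \<Rightarrow> 'a set \<Rightarrow> bool" where
  "is_oct G S \<longleftrightarrow> S \<subseteq> fst G \<and> bipartite_on G (fst G - S)"

definition is_min_oct :: "'a graph \<Rightarrow> 'a set \<Rightarrow> bool" where
  "is_min_oct G S \<longleftrightarrow> is_oct G S \<and> (\<forall>S'. is_oct G S' \<longrightarrow> card S \<le> card S')"

definition is_occ :: "'a graph \<Rightarrow> 'a set \<Rightarrow> 'a set \<Rightarrow> 'a set \<Rightarrow> bool" where
  "is_occ G XB XC XR \<longleftrightarrow>
     XB \<union> XC \<union> XR = fst G \<and> XB \<inter> XC = {} \<and> XB \<inter> XR = {} \<and> XC \<inter> XR = {} \<and>
     bipartite_on G XB \<and>
     (\<forall>u\<in>XB. \<forall>v\<in>XR. {u, v} \<notin> snd G) \<and>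
     XB \<union> XC \<noteq> {}"

definition proper_2col_on :: "'a graph \<Rightarrow> 'a set \<Rightarrow> ('a \<Rightarrow> bool) \<Rightarrow> bool" where
  "proper_2col_on G W f \<longleftrightarrow> (\<forall>u\<in>W. \<forall>v\<in>W. {u, v} \<in> snd G \<longrightarrow> f u \<noteq> f v)"

text \<open>Walks: lists of vertices, consecutive ones adjacent; length = length xs - 1.\<close>
definition is_walk :: "'a graph \<Rightarrow> 'a list \<Rightarrow> bool" where
  "is_walk G xs \<longleftrightarrow> xs \<noteq> [] \<and> set xs \<subseteq> fst G \<and>
     (\<forall>i. Suc i < length xs \<longrightarrow> {xs ! i, xs ! Suc i} \<in> snd G)"

definition connected_in :: "'a graph \<Rightarrow> 'a set \<Rightarrow> 'a \<Rightarrow> 'a \<Rightarrow> bool" where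
  "connected_in G W a b \<longleftrightarrow>
     a \<in> W \<and> (\<lambda>x y. x \<in> W \<and> y \<in> W \<and> {x, y} \<in> snd G)\<^sup>*\<^sup>* a b"

datatype 'a auxv = Base 'a | Term 'a bool

definition aux_graph :: "'a graph \<Rightarrow> 'a set \<Rightarrow> 'a set \<Rightarrow> ('a \<Rightarrow> bool) \<Rightarrow> 'a auxv graph" where
  "aux_graph G XB XC f =
     (Base ` XB \<union> {Term v i | v i. v \<in> XC},
      {{Base u, Base w} | u w. u \<in> XB \<and> w \<in> XB \<and> {u, w} \<in> snd G} \<union>
      {{Term v (f u), Base u} | u v. v \<in> XC \<and> u \<in> XB \<and> {u, v} \<in> snd G})"

definition terminals :: "'a set \<Rightarrow> 'a auxv set" where
  "terminals XC = {Term v i | v i. v \<in> XC}"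

definition separates3 ::
  "'a auxv graph \<Rightarrow> 'a set \<Rightarrow> 'a auxv set \<Rightarrow> 'a auxv set \<Rightarrow> 'a auxv set \<Rightarrow> 'a auxv set \<Rightarrow> bool" where
  "separates3 Ga S T1 T2 T3 TX \<longleftrightarrow>
     (let W = fst Ga - TX - Base ` S in
      \<forall>A\<in>{T1, T2, T3}. \<forall>B\<in>{T1, T2, T3}. A \<noteq> B \<longrightarrow>
        (\<forall>a\<in>A. \<forall>b\<in>B. \<not> connected_in Ga W a b))"

definition star_property :: "'a graph \<Rightarrow> 'a set \<Rightarrow> 'a set \<Rightarrow> ('a \<Rightarrow> bool) \<Rightarrow> 'a set \<Rightarrow> bool" where
  "star_property G XB XC f Bs \<longleftrightarrow>
     (let Ga = aux_graph G XB XC f; T = terminals XC in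
      \<forall>T1 T2 T3 TX.
        T1 \<union> T2 \<union> T3 \<union> TX = T \<and>
        T1 \<inter> T2 = {} \<and> T1 \<inter> T3 = {} \<and> T1 \<inter> TX = {} \<and>
        T2 \<inter> T3 = {} \<and> T2 \<inter> TX = {} \<and> T3 \<inter> TX = {} \<longrightarrow>
        (\<exists>S. S \<subseteq> XB \<and> card S \<le> card T \<and> separates3 Ga S T1 T2 T3 TX) \<longrightarrow>
        (\<exists>S. S \<subseteq> Bs \<and> separates3 Ga S T1 T2 T3 TX \<and>
             (\<forall>S'. S' \<subseteq> XB \<and> separates3 Ga S' T1 T2 T3 TX \<longrightarrow> card S \<le> card S')))"

text \<open>Vertices of G': original vertices Orig v, and new gadget vertices
Gad P odd k i attached to the unordered pair P = {u,v} (P has 1 or 2 elements),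
the parity (odd = True for odd walks), the copy index k \<in> {0,1}
(x vs x') and the position i \<in> {0,1} along the path (x vs y).\<close>

datatype 'a rv = Orig 'a | Gad "'a set" bool nat nat

definition pfst :: "'a set \<Rightarrow> 'a" where
  "pfst P = (SOME u. u \<in> P)"

definition psnd :: "'a set \<Rightarrow> 'a" where
  "psnd P = (SOME v. P = {pfst P, v})"

definition has_par_walk :: "'a graph \<Rightarrow> 'a set \<Rightarrow> 'a \<Rightarrow> 'a \<Rightarrow> bool \<Rightarrow> bool" where
  "has_par_walk G I u v odd_par \<longleftrightarrow>
     (\<exists>xs. is_walk G xs \<and> length xs \<ge> 3 \<and> hd xs = u \<and> last xs = v \<and>
           set (butlast (tl xs)) \<subseteq> I \<and> (odd (length xs - 1) \<longleftrightarrow> odd_par))"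

definition gadget_needed :: "'a graph \<Rightarrow> 'a set \<Rightarrow> 'a set \<Rightarrow> 'a set \<Rightarrow> 'a set \<Rightarrow> bool \<Rightarrow> bool" where
  "gadget_needed G XB XC Bs P odd_par \<longleftrightarrow>
     (\<exists>u v. P = {u, v} \<and> u \<in> XC \<union> Bs \<and> v \<in> XC \<union> Bs \<and>
            has_par_walk G (XB - Bs) u v odd_par)"

definition reduced_graph :: "'a graph \<Rightarrow> 'a set \<Rightarrow> 'a set \<Rightarrow> 'a set \<Rightarrow> 'a rv graph" where
  "reduced_graph G XB XC Bs =
     (let K = fst G - (XB - Bs) in
      (Orig ` K \<union>
       {Gad P False k 0 | P k. gadget_needed G XB XC Bs P False \<and> k < 2} \<union>
       {Gad P True k i | P k i. gadget_needed G XB XC Bs P True \<and> k < 2 \<and> i < 2},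
       {{Orig u, Orig v} | u v. u \<in> K \<and> v \<in> K \<and> {u, v} \<in> snd G} \<union>
       {{Orig (pfst P), Gad P False k 0} | P k. gadget_needed G XB XC Bs P False \<and> k < 2} \<union>
       {{Gad P False k 0, Orig (psnd P)} | P k. gadget_needed G XB XC Bs P False \<and> k < 2} \<union>
       {{Orig (pfst P), Gad P True k 0} | P k. gadget_needed G XB XC Bs P True \<and> k < 2} \<union>
       {{Gad P True k 0, Gad P True k 1} | P k. gadget_needed G XB XC Bs P True \<and> k < 2} \<union>
       {{Gad P True k 1, Orig (psnd P)} | P k. gadget_needed G XB XC Bs P True \<and> k < 2}))"

end

theory Submission imports Defs begin

fun chain :: "'a set set \<Rightarrow> 'a list \<Rightarrow> bool" where
  "chain E [] = True"
| "chain E [x] = True"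
| "chain E (x # y # xs) = ({x, y} \<in> E \<and> chain E (y # xs))"

lemma chain_iff: "chain E xs \<longleftrightarrow> (\<forall>i. Suc i < length xs \<longrightarrow> {xs ! i, xs ! Suc i} \<in> E)"
proof (induction E xs rule: chain.induct)
  case (3 E x y xs)
  show ?case
  proof
    assume "chain E (x # y # xs)"
    then show "\<forall>i. Suc i < length (x # y # xs) \<longrightarrow> {(x # y # xs) ! i, (x # y # xs) ! Suc i} \<in> E"
      using 3 by (auto simp: nth_Cons split: nat.splits)
  next
    assume h: "\<forall>i. Suc i < length (x # y # xs) \<longrightarrow> {(x # y # xs) ! i, (x # y # xs) ! Suc i} \<in> E"
    have "{x,y} \<in> E" using h[rule_format, of 0] by simp
    moreover have "\<forall>i. Suc i < length (y # xs) \<longrightarrow> {(y # xs) ! i, (y # xs) ! Suc i} \<in> E"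
      using h by (metis Suc_less_eq length_Cons nth_Cons_Suc)
    ultimately show "chain E (x # y # xs)" using 3 by simp
  qed
qed auto

lemma walk_chain: "is_walk G xs \<longleftrightarrow> xs \<noteq> [] \<and> set xs \<subseteq> fst G \<and> chain (snd G) xs"
  unfolding is_walk_def chain_iff by blast

lemma chain_Cons: "chain E (x # ys) \<longleftrightarrow> chain E ys \<and> (ys \<noteq> [] \<longrightarrow> {x, hd ys} \<in> E)"
  by (cases ys) auto

lemma chain_append: "chain E (xs @ ys) \<longleftrightarrow> chain E xs \<and> chain E ys \<and> (xs \<noteq> [] \<and> ys \<noteq> [] \<longrightarrow> {last xs, hd ys} \<in> E)"
  by (induction xs) (auto simp: chain_Cons)

lemma chain_rev: "chain E (rev xs) \<longleftrightarrow> chain E xs"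
  by (induction E xs rule: chain.induct) (auto simp: chain_append insert_commute)

lemma bool3: "(a::bool) \<noteq> b \<Longrightarrow> (b \<noteq> d) = p \<Longrightarrow> (a \<noteq> d) = (\<not> p)" by auto

lemma chain_parity:
  fixes c :: "'a \<Rightarrow> bool"
  assumes "chain E xs" "set xs \<subseteq> W" "\<forall>u\<in>W. \<forall>v\<in>W. {u,v} \<in> E \<longrightarrow> c u \<noteq> c v" "xs \<noteq> []"
  shows "(c (hd xs) \<noteq> c (last xs)) = odd (length xs - 1)"
  using assms
proof (induction E xs rule: chain.induct)
  case (3 E x y xs)
  then have cxy: "c x \<noteq> c y" by auto
  have IH: "(c y \<noteq> c (last (y#xs))) = odd (length xs)" using 3 by simp
  have "(c x \<noteq> c (last (y#xs))) = (\<not> odd (length xs))" by (rule bool3[OF cxy IH])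
  then show ?case by simp
next
  case (2 E x) then show ?case by simp
next
  case (1 E) then show ?case by simp
qed

lemma pair_pfst_psnd: assumes "P = {u, v}" shows "P = {pfst P, psnd P}"
proof -
  have m: "pfst P \<in> P" unfolding pfst_def using assms by (metis insertI1 someI)
  have "\<exists>w. P = {pfst P, w}" using m assms by auto
  then show ?thesis unfolding psnd_def by (rule someI_ex)
qed

definition isrc :: "('a set \<Rightarrow> bool \<Rightarrow> bool) \<Rightarrow> 'a rv \<Rightarrow> bool" where
  "isrc rc x = (case x of Gad Q b k i \<Rightarrow> rc Q b | Orig u \<Rightarrow> False)"

definition gcol :: "'a rv set \<Rightarrow> ('a rv \<Rightarrow> bool) \<Rightarrow> 'a set \<Rightarrow> bool \<Rightarrow> nat \<Rightarrow> bool" where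
  "gcol W dz Q b i = (let x0 = (if Orig (pfst Q) \<in> W then \<not> dz (Orig (pfst Q))
      else (if b then dz (Orig (psnd Q)) else \<not> dz (Orig (psnd Q)))) in if i = 0 then x0 else \<not> x0)"

definition dcol :: "'a rv set \<Rightarrow> ('a rv \<Rightarrow> bool) \<Rightarrow> ('a set \<Rightarrow> bool \<Rightarrow> bool) \<Rightarrow> 'a rv \<Rightarrow> bool" where
  "dcol W dz rc x = (case x of Orig u \<Rightarrow> dz x | Gad Q b k i \<Rightarrow> if rc Q b then gcol W dz Q b i else dz x)"

lemma edge_sym: "{x,y} = {a,b} \<Longrightarrow> x \<in> W \<Longrightarrow> y \<in> W \<Longrightarrow> (a \<in> W \<Longrightarrow> b \<in> W \<Longrightarrow> d a \<noteq> d b) \<Longrightarrow> d x \<noteq> d y"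
  by (auto simp: doubleton_eq_iff)

lemma edges_G': "snd (reduced_graph G XB XC Bs) =
      ({{Orig u, Orig v} | u v. u \<in> fst G - (XB - Bs) \<and> v \<in> fst G - (XB - Bs) \<and> {u, v} \<in> snd G} \<union>
       {{Orig (pfst P), Gad P False k 0} | P k. gadget_needed G XB XC Bs P False \<and> k < 2} \<union>
       {{Gad P False k 0, Orig (psnd P)} | P k. gadget_needed G XB XC Bs P False \<and> k < 2} \<union>
       {{Orig (pfst P), Gad P True k 0} | P k. gadget_needed G XB XC Bs P True \<and> k < 2} \<union>
       {{Gad P True k 0, Gad P True k 1} | P k. gadget_needed G XB XC Bs P True \<and> k < 2} \<union>
       {{Gad P True k 1, Orig (psnd P)} | P k. gadget_needed G XB XC Bs P True \<and> k < 2})"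
  by (simp add: reduced_graph_def Let_def)

lemma verts_G': "fst (reduced_graph G XB XC Bs) =
      (Orig ` (fst G - (XB - Bs)) \<union>
       {Gad P False k 0 | P k. gadget_needed G XB XC Bs P False \<and> k < 2} \<union>
       {Gad P True k i | P k i. gadget_needed G XB XC Bs P True \<and> k < 2 \<and> i < 2})"
  by (simp add: reduced_graph_def Let_def)

lemma GL:
  fixes dz :: "'a rv \<Rightarrow> bool"
  assumes A1: "\<And>x y. {x,y} \<in> snd (reduced_graph G XB XC Bs) \<Longrightarrow> x \<in> W \<Longrightarrow> y \<in> W \<Longrightarrow>
        \<not> isrc rc x \<Longrightarrow> \<not> isrc rc y \<Longrightarrow> dz x \<noteq> dz y"
    and A2: "\<And>Q b. rc Q b \<Longrightarrow> gadget_needed G XB XC Bs Q b \<Longrightarrow> Orig (pfst Q) \<in> W \<Longrightarrow>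
        Orig (psnd Q) \<in> W \<Longrightarrow> (dz (Orig (pfst Q)) \<noteq> dz (Orig (psnd Q))) = b"
  shows "bipartite_on (reduced_graph G XB XC Bs) W"
  unfolding bipartite_on_def
proof (intro exI[of _ "dcol W dz rc"] ballI impI)
  fix x y assume xW: "x \<in> W" and yW: "y \<in> W" and e: "{x, y} \<in> snd (reduced_graph G XB XC Bs)"
  let ?d = "dcol W dz rc"
  have nrc: "?d a \<noteq> ?d b" if "{a,b} \<in> snd (reduced_graph G XB XC Bs)" "a \<in> W" "b \<in> W"
     "\<not> isrc rc a" "\<not> isrc rc b" for a b
  proof -
    have "?d a = dz a" "?d b = dz b" using that(4,5)
      by (auto simp: dcol_def isrc_def split: rv.splits)
    then show ?thesis using A1[OF that] by simp
  qed
  show "?d x \<noteq> ?d y"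
    using e unfolding edges_G'
  proof (elim UnE CollectE exE conjE)
    fix u v assume "{x,y} = {Orig u, Orig v}" "u \<in> fst G - (XB - Bs)" "v \<in> fst G - (XB - Bs)" "{u,v} \<in> snd G"
    then show ?thesis using nrc e xW yW by (auto simp: isrc_def doubleton_eq_iff)
  next
    fix P k assume h: "{x,y} = {Orig (pfst P), Gad P False k 0}" "gadget_needed G XB XC Bs P False" "k < 2"
    show ?thesis
    proof (rule edge_sym[OF h(1) xW yW])
      assume W: "Orig (pfst P) \<in> W" "Gad P False k 0 \<in> W"
      show "?d (Orig (pfst P)) \<noteq> ?d (Gad P False k 0)"
      proof (cases "rc P False")
        case True then show ?thesis using W by (simp add: dcol_def gcol_def)
      next
        case False then show ?thesis using nrc[of "Orig (pfst P)" "Gad P False k 0"] e h W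
          by (simp add: isrc_def)
      qed
    qed
  next
    fix P k assume h: "{x,y} = {Gad P False k 0, Orig (psnd P)}" "gadget_needed G XB XC Bs P False" "k < 2"
    show ?thesis
    proof (rule edge_sym[OF h(1) xW yW])
      assume W: "Gad P False k 0 \<in> W" "Orig (psnd P) \<in> W"
      show "?d (Gad P False k 0) \<noteq> ?d (Orig (psnd P))"
      proof (cases "rc P False")
        case True then show ?thesis using W A2[of P False] h by (auto simp: dcol_def gcol_def)
      next
        case False then show ?thesis using nrc[of "Gad P False k 0" "Orig (psnd P)"] e h W
          by (simp add: isrc_def)
      qed
    qed
  next
    fix P k assume h: "{x,y} = {Orig (pfst P), Gad P True k 0}" "gadget_needed G XB XC Bs P True" "k < 2"
    show ?thesis
    proof (rule edge_sym[OF h(1) xW yW])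
      assume W: "Orig (pfst P) \<in> W" "Gad P True k 0 \<in> W"
      show "?d (Orig (pfst P)) \<noteq> ?d (Gad P True k 0)"
      proof (cases "rc P True")
        case True then show ?thesis using W by (simp add: dcol_def gcol_def)
      next
        case False then show ?thesis using nrc[of "Orig (pfst P)" "Gad P True k 0"] e h W
          by (simp add: isrc_def)
      qed
    qed
  next
    fix P k assume h: "{x,y} = {Gad P True k 0, Gad P True k 1}" "gadget_needed G XB XC Bs P True" "k < 2"
    show ?thesis
    proof (rule edge_sym[OF h(1) xW yW])
      assume W: "Gad P True k 0 \<in> W" "Gad P True k 1 \<in> W"
      show "?d (Gad P True k 0) \<noteq> ?d (Gad P True k 1)"
      proof (cases "rc P True")
        case True then show ?thesis using W by (simp add: dcol_def gcol_def Let_def)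
      next
        case False then show ?thesis using nrc[of "Gad P True k 0" "Gad P True k 1"] e h W
          by (simp add: isrc_def)
      qed
    qed
  next
    fix P k assume h: "{x,y} = {Gad P True k 1, Orig (psnd P)}" "gadget_needed G XB XC Bs P True" "k < 2"
    show ?thesis
    proof (rule edge_sym[OF h(1) xW yW])
      assume W: "Gad P True k 1 \<in> W" "Orig (psnd P) \<in> W"
      show "?d (Gad P True k 1) \<noteq> ?d (Orig (psnd P))"
      proof (cases "rc P True")
        case True then show ?thesis using W A2[of P True] h by (auto simp: dcol_def gcol_def)
      next
        case False then show ?thesis using nrc[of "Gad P True k 1" "Orig (psnd P)"] e h W
          by (simp add: isrc_def)
      qed
    qed
  qed
qed

lemma eO: "u \<in> fst G - (XB - Bs) \<Longrightarrow> v \<in> fst G - (XB - Bs) \<Longrightarrow> {u,v} \<in> snd G \<Longrightarrow> {Orig u, Orig v} \<in> snd (reduced_graph G XB XC Bs)"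
  unfolding edges_G' by (intro UnI1) blast
lemma e1: "gadget_needed G XB XC Bs P False \<Longrightarrow> k < 2 \<Longrightarrow> {Orig (pfst P), Gad P False k 0} \<in> snd (reduced_graph G XB XC Bs)"
  unfolding edges_G' by (rule UnI1, rule UnI1, rule UnI1, rule UnI1, rule UnI2) blast
lemma e2: "gadget_needed G XB XC Bs P False \<Longrightarrow> k < 2 \<Longrightarrow> {Gad P False k 0, Orig (psnd P)} \<in> snd (reduced_graph G XB XC Bs)"
  unfolding edges_G' by (rule UnI1, rule UnI1, rule UnI1, rule UnI2) blast
lemma e3: "gadget_needed G XB XC Bs P True \<Longrightarrow> k < 2 \<Longrightarrow> {Orig (pfst P), Gad P True k 0} \<in> snd (reduced_graph G XB XC Bs)"
  unfolding edges_G' by (rule UnI1, rule UnI1, rule UnI2) blast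
lemma e4: "gadget_needed G XB XC Bs P True \<Longrightarrow> k < 2 \<Longrightarrow> {Gad P True k 0, Gad P True k 1} \<in> snd (reduced_graph G XB XC Bs)"
  unfolding edges_G' by (rule UnI1, rule UnI2) blast
lemma e5: "gadget_needed G XB XC Bs P True \<Longrightarrow> k < 2 \<Longrightarrow> {Gad P True k 1, Orig (psnd P)} \<in> snd (reduced_graph G XB XC Bs)"
  unfolding edges_G' by (rule UnI2) blast

lemma copy_par:
  fixes c :: "'a rv \<Rightarrow> bool"
  assumes bip: "\<forall>x\<in>W. \<forall>y\<in>W. {x,y} \<in> snd (reduced_graph G XB XC Bs) \<longrightarrow> c x \<noteq> c y"
    and gn: "gadget_needed G XB XC Bs P b" and k: "k < 2"
    and W: "Gad P b k 0 \<in> W" "b \<longrightarrow> Gad P b k 1 \<in> W" "Orig (pfst P) \<in> W" "Orig (psnd P) \<in> W"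
  shows "(c (Orig (pfst P)) \<noteq> c (Orig (psnd P))) = b"
proof (cases b)
  case False
  have gF: "gadget_needed G XB XC Bs P False" using gn False by simp
  have W0: "Gad P False k 0 \<in> W" using W(1) False by simp
  have "c (Orig (pfst P)) \<noteq> c (Gad P False k 0)" using bip W0 W(3) e1[OF gF k] by blast
  moreover have "c (Gad P False k 0) \<noteq> c (Orig (psnd P))" using bip W0 W(4) e2[OF gF k] by blast
  ultimately show ?thesis using False by (cases "c (Orig (pfst P))"; cases "c (Gad P False k 0)"; simp)
next
  case True
  have gT: "gadget_needed G XB XC Bs P True" using gn True by simp
  have W0: "Gad P True k 0 \<in> W" "Gad P True k 1 \<in> W" using W(1,2) True by simp_all
  have "c (Orig (pfst P)) \<noteq> c (Gad P True k 0)" using bip W0 W(3) e3[OF gT k] by blast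
  moreover have "c (Gad P True k 0) \<noteq> c (Gad P True k 1)" using bip W0 e4[OF gT k] by blast
  moreover have "c (Gad P True k 1) \<noteq> c (Orig (psnd P))" using bip W0 W(4) e5[OF gT k] by blast
  ultimately show ?thesis using True by (cases "c (Orig (pfst P))"; cases "c (Gad P True k 0)"; simp)
qed

lemma gn_facts:
  assumes "gadget_needed G XB XC Bs P b"
  shows "P = {pfst P, psnd P}" "pfst P \<in> XC \<union> Bs" "psnd P \<in> XC \<union> Bs"
proof -
  obtain u v where h: "P = {u, v}" "u \<in> XC \<union> Bs" "v \<in> XC \<union> Bs"
    using assms unfolding gadget_needed_def by blast
  have e: "P = {pfst P, psnd P}" using pair_pfst_psnd[OF h(1)] .
  show "P = {pfst P, psnd P}" by (rule e)
  have "pfst P \<in> P" "psnd P \<in> P" using e by blast+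
  then show "pfst P \<in> XC \<union> Bs" "psnd P \<in> XC \<union> Bs" using h by auto
qed

lemma bx1: "((a::bool) \<noteq> x) = (\<not> p) \<Longrightarrow> (a \<noteq> p) \<noteq> x" by (cases a; cases x; cases p) auto
lemma bx2: "((a::bool) \<noteq> b) = (p = q) \<Longrightarrow> (b \<noteq> q) \<noteq> (a \<noteq> p)" by (cases a; cases b; cases p; cases q) auto

lemma set_hd_last: "xs \<noteq> [] \<Longrightarrow> set xs \<subseteq> insert (hd xs) (insert (last xs) (set (butlast (tl xs))))"
proof (cases xs)
  case (Cons x ys)
  show ?thesis
  proof (cases "ys = []")
    case True then show ?thesis using Cons by simp
  next
    case False
    have "set ys \<subseteq> insert (last ys) (set (butlast ys))" by (induction ys) auto
    then show ?thesis using Cons False by auto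
  qed
qed simp

lemma bx3: "(a::bool) \<noteq> b \<Longrightarrow> p \<noteq> q \<Longrightarrow> (a \<noteq> p) = (b \<noteq> q)" by (cases a; cases b; cases p) auto
lemma bx4: "(a::bool) \<noteq> b \<Longrightarrow> (b = q) = (a \<noteq> q)" by (cases a; cases b) auto

locale occ_setting =
  fixes G :: "'a graph" and XB XC XR Bs :: "'a set" and f :: "'a \<Rightarrow> bool"
  assumes gr: "graph G" and occ: "is_occ G XB XC XR" and col: "proper_2col_on G XB f"
    and BsXB: "Bs \<subseteq> XB"
begin

abbreviation "K \<equiv> fst G - (XB - Bs)"
abbreviation "G' \<equiv> reduced_graph G XB XC Bs"
abbreviation "gn \<equiv> gadget_needed G XB XC Bs"

lemma finV: "finite (fst G)" using gr unfolding graph_def by simp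

lemma part: "XB \<union> XC \<union> XR = fst G" "XB \<inter> XC = {}" "XB \<inter> XR = {}" "XC \<inter> XR = {}"
   "\<And>u v. u \<in> XB \<Longrightarrow> v \<in> XR \<Longrightarrow> {u, v} \<notin> snd G"
  using occ unfolding is_occ_def by blast+

lemma gn_K: assumes "gn P b" shows "pfst P \<in> K" "psnd P \<in> K"
  using gn_facts[OF assms] part BsXB by auto

lemma finV': "finite (fst G')"
proof -
  have "fst G' \<subseteq> Orig ` fst G \<union> (\<lambda>(P,b,k,i). Gad P b k i) ` (Pow (fst G) \<times> UNIV \<times> {..<2} \<times> {..<2})"
  proof
    fix x assume "x \<in> fst G'"
    then show "x \<in> Orig ` fst G \<union> (\<lambda>(P,b,k,i). Gad P b k i) ` (Pow (fst G) \<times> UNIV \<times> {..<2} \<times> {..<2})"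
      unfolding verts_G'
    proof (elim UnE CollectE exE conjE)
      fix P k assume "x = Gad P False k 0" "gn P False" "k < 2"
      moreover have "P \<subseteq> fst G"
        using ord_eq_le_trans[OF gn_facts(1)[OF \<open>gn P False\<close>]] gn_K[OF \<open>gn P False\<close>] by auto
      ultimately show ?thesis by (auto intro!: image_eqI[where x="(P,False,k,0)"])
    next
      fix P k i assume "x = Gad P True k i" "gn P True" "k < 2" "i < 2"
      moreover have "P \<subseteq> fst G"
        using ord_eq_le_trans[OF gn_facts(1)[OF \<open>gn P True\<close>]] gn_K[OF \<open>gn P True\<close>] by auto
      ultimately show ?thesis by (auto intro!: image_eqI[where x="(P,True,k,i)"])
    qed auto
  qed
  moreover have "finite (Orig ` fst G \<union> (\<lambda>(P,b,k,i). Gad P b k i) ` (Pow (fst G) \<times> UNIV \<times> {..<2} \<times> {..<2}))"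
    using finV by auto
  ultimately show ?thesis by (rule finite_subset)
qed

lemma gad_in_V':
  assumes "gn P b" "k < 2" "b \<longrightarrow> i < 2" "\<not> b \<longrightarrow> i = 0"
  shows "Gad P b k i \<in> fst G'"
proof (cases b)
  case True
  then show ?thesis using assms unfolding verts_G' by simp
next
  case False
  then show ?thesis using assms unfolding verts_G' by simp
qed

lemma orig_in_V': "u \<in> K \<Longrightarrow> Orig u \<in> fst G'"
  unfolding verts_G' by (intro UnI1) blast

lemma no_gadget:
  assumes min: "is_min_oct G' S'" shows "S' \<subseteq> Orig ` K"
proof (rule ccontr)
  assume "\<not> ?thesis"
  then obtain g where g: "g \<in> S'" "g \<notin> Orig ` K" by blast
  have SV: "S' \<subseteq> fst G'" and bip: "bipartite_on G' (fst G' - S')"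
    and mn: "\<And>S''. is_oct G' S'' \<Longrightarrow> card S' \<le> card S''"
    using min unfolding is_min_oct_def is_oct_def by auto
  obtain c :: "'a rv \<Rightarrow> bool" where c: "\<forall>x\<in>fst G' - S'. \<forall>y\<in>fst G' - S'. {x,y} \<in> snd G' \<longrightarrow> c x \<noteq> c y"
    using bip unfolding bipartite_on_def by blast
  have finS': "finite S'" using finite_subset[OF SV finV'] .
  have gV: "g \<in> fst G'" using g SV by blast
  obtain P b k i where gP: "g = Gad P b k i" "gn P b"
  proof (cases g)
    case (Orig u)
    then have "u \<in> K" using gV unfolding verts_G' by auto
    then show ?thesis using g(2) Orig by blast
  next
    case (Gad P b k i)
    then have "gn P b" using gV unfolding verts_G' by auto
    then show ?thesis using Gad that by blast
  qed
  define gad where "gad = {x. \<exists>k i. x = Gad P b k i}"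
  have gg: "g \<in> gad" using gP unfolding gad_def by blast
  have isrc_gad: "\<And>x. \<not> isrc (\<lambda>Q b'. Q = P \<and> b' = b) x \<Longrightarrow> x \<notin> gad"
    unfolding gad_def isrc_def by auto
  show False
  proof (cases "\<exists>k'<2. Gad P b k' 0 \<notin> S' \<and> (b \<longrightarrow> Gad P b k' 1 \<notin> S')")
    case True
    then obtain k' where k': "k' < 2" "Gad P b k' 0 \<notin> S'" "b \<longrightarrow> Gad P b k' 1 \<notin> S'" by blast
    define S'' where "S'' = S' - gad"
    have WW: "x \<in> fst G' - S'" if "x \<in> fst G' - S''" "x \<notin> gad" for x
      using that unfolding S''_def by blast
    have "bipartite_on G' (fst G' - S'')"
    proof (rule GL[where dz = c and rc = "\<lambda>Q b'. Q = P \<and> b' = b"])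
      fix x y assume "{x, y} \<in> snd G'" "x \<in> fst G' - S''" "y \<in> fst G' - S''"
        "\<not> isrc (\<lambda>Q b'. Q = P \<and> b' = b) x" "\<not> isrc (\<lambda>Q b'. Q = P \<and> b' = b) y"
      then show "c x \<noteq> c y" using c WW isrc_gad by blast
    next
      fix Q b' assume "Q = P \<and> b' = b" "gn Q b'" "Orig (pfst Q) \<in> fst G' - S''" "Orig (psnd Q) \<in> fst G' - S''"
      then have h: "Q = P" "b' = b" "Orig (pfst P) \<in> fst G' - S'" "Orig (psnd P) \<in> fst G' - S'"
        using WW unfolding gad_def by auto
      have "Gad P b k' 0 \<in> fst G' - S'" using gad_in_V'[OF gP(2) k'(1)] k' by auto
      moreover have "b \<longrightarrow> Gad P b k' 1 \<in> fst G' - S'" using gad_in_V'[OF gP(2) k'(1)] k' by auto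
      ultimately show "(c (Orig (pfst Q)) \<noteq> c (Orig (psnd Q))) = b'"
        using copy_par[OF c gP(2) k'(1)] h by auto
    qed
    then have "is_oct G' S''" using SV unfolding is_oct_def S''_def by auto
    moreover have "card S'' < card S'"
      unfolding S''_def using gg g(1) finS' by (intro psubset_card_mono) auto
    ultimately show False using mn by fastforce
  next
    case False
    then have F: "\<And>k'. k' < 2 \<Longrightarrow> \<exists>i. Gad P b k' i \<in> S'" by blast
    obtain i0 i1 where "Gad P b 0 i0 \<in> S'" "Gad P b 1 i1 \<in> S'" using F[of 0] F[of 1] by auto
    then have sub: "{Gad P b 0 i0, Gad P b 1 i1} \<subseteq> S' \<inter> gad" unfolding gad_def by auto
    define S'' where "S'' = (S' - gad) \<union> {Orig (pfst P)}"
    have WW: "x \<in> fst G' - S'" if "x \<in> fst G' - S''" "x \<notin> gad" for x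
      using that unfolding S''_def by blast
    have "bipartite_on G' (fst G' - S'')"
    proof (rule GL[where dz = c and rc = "\<lambda>Q b'. Q = P \<and> b' = b"])
      fix x y assume "{x, y} \<in> snd G'" "x \<in> fst G' - S''" "y \<in> fst G' - S''"
        "\<not> isrc (\<lambda>Q b'. Q = P \<and> b' = b) x" "\<not> isrc (\<lambda>Q b'. Q = P \<and> b' = b) y"
      then show "c x \<noteq> c y" using c WW isrc_gad by blast
    next
      fix Q b' assume "Q = P \<and> b' = b" "gn Q b'" "Orig (pfst Q) \<in> fst G' - S''" "Orig (psnd Q) \<in> fst G' - S''"
      then show "(c (Orig (pfst Q)) \<noteq> c (Orig (psnd Q))) = b'" unfolding S''_def by auto
    qed
    moreover have "S'' \<subseteq> fst G'" unfolding S''_def using SV orig_in_V'[OF gn_K(1)[OF gP(2)]] by auto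
    ultimately have "is_oct G' S''" unfolding is_oct_def by auto
    moreover have "card S'' < card S'"
    proof -
      have fd: "finite (S' - gad)" using finS' by simp
      have "card S'' \<le> card (S' - gad) + 1" unfolding S''_def
        using card_insert_if[OF fd, of "Orig (pfst P)"] by simp
      moreover have "card (S' - gad) \<le> card (S' - {Gad P b 0 i0, Gad P b 1 i1})"
        using sub finS' by (intro card_mono) auto
      moreover have "card (S' - {Gad P b 0 i0, Gad P b 1 i1}) = card S' - 2"
        using sub finS' by (subst card_Diff_subset) auto
      moreover have "card {Gad P b 0 i0, Gad P b 1 i1} = 2" by simp
      then have "card S' \<ge> 2" using sub finS' card_mono[OF finS', of "{Gad P b 0 i0, Gad P b 1 i1}"] by auto
      ultimately show ?thesis by linarith
    qed
    ultimately show False using mn by fastforce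
  qed
qed

lemma dir2:
  assumes oct: "is_oct G' S'" and SK: "S' \<subseteq> Orig ` K"
  shows "is_oct G (Orig -` S')"
proof -
  define S where "S = Orig -` S'"
  have SsubK: "S \<subseteq> K" using SK unfolding S_def by auto
  obtain c :: "'a rv \<Rightarrow> bool" where c: "\<forall>x\<in>fst G' - S'. \<forall>y\<in>fst G' - S'. {x,y} \<in> snd G' \<longrightarrow> c x \<noteq> c y"
    using oct unfolding is_oct_def bipartite_on_def by blast
  have origW: "Orig u \<in> fst G' - S'" if "u \<in> K" "u \<notin> S" for u
    using that orig_in_V' unfolding S_def by auto
  have R: "(c (Orig a) \<noteq> c (Orig a')) = p"
    if hw: "has_par_walk G (XB - Bs) a a' p" and ha: "a \<in> XC \<union> Bs" "a \<notin> S" and ha': "a' \<in> XC \<union> Bs" "a' \<notin> S"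
    for a a' p
  proof -
    define P where "P = {a, a'}"
    have gP: "gn P p" unfolding gadget_needed_def P_def using hw ha ha' by blast
    have e: "{pfst P, psnd P} = {a, a'}" using gn_facts(1)[OF gP] P_def by simp
    have aK: "a \<in> K" "a' \<in> K" using ha ha' BsXB part by auto
    have "Orig (pfst P) \<in> fst G' - S'" "Orig (psnd P) \<in> fst G' - S'"
      using e origW aK ha ha' by (auto simp: doubleton_eq_iff)
    moreover have "Gad P p 0 0 \<in> fst G' - S'" "p \<longrightarrow> Gad P p 0 1 \<in> fst G' - S'"
      using gad_in_V'[OF gP, of 0] SK by auto
    ultimately have "(c (Orig (pfst P)) \<noteq> c (Orig (psnd P))) = p"
      using copy_par[OF c gP, of 0] by auto
    then show ?thesis using e by (auto simp: doubleton_eq_iff)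
  qed
  define att where "att x a w \<longleftrightarrow> a \<in> XC \<union> Bs \<and> a \<notin> S \<and> chain (snd G) w \<and> length w \<ge> 2 \<and>
      hd w = a \<and> last w = x \<and> set (tl w) \<subseteq> XB - Bs" for x a w
  define Ap where "Ap x = (SOME p. att x (fst p) (snd p))" for x
  have Ap: "att x (fst (Ap x)) (snd (Ap x))" if "att x a w" for x a w
  proof -
    have "\<exists>p. att x (fst p) (snd p)" using that by (intro exI[of _ "(a,w)"]) simp
    then show ?thesis unfolding Ap_def by (rule someI_ex)
  qed
  have att_set: "set w \<subseteq> fst G" if "att x a w" for x a w
  proof -
    have s1: "set w \<subseteq> insert (hd w) (set (tl w))" by (cases w) auto
    have s2: "hd w \<in> fst G" "set (tl w) \<subseteq> fst G" using that BsXB part(1) unfolding att_def by auto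
    show ?thesis using s1 s2 by blast
  qed
  define col where "col x = (if x \<in> K then c (Orig x)
      else if \<exists>a w. att x a w then (c (Orig (fst (Ap x))) \<noteq> odd (length (snd (Ap x)) - 1)) else f x)" for x
  have KK: "col x \<noteq> col y" if "x \<in> K" "y \<in> K" "x \<notin> S" "y \<notin> S" "{x,y} \<in> snd G" for x y
  proof -
    have "{Orig x, Orig y} \<in> snd G'" using eO[OF that(1,2,5)] .
    then show ?thesis using c origW that unfolding col_def by auto
  qed
  have KN: "col x \<noteq> col y" if "x \<in> K" "y \<in> fst G" "y \<notin> K" "x \<notin> S" "{x,y} \<in> snd G" for x y
  proof -
    have yB: "y \<in> XB - Bs" using that by auto
    have xC: "x \<in> XC \<union> Bs" using that part(1) part(5)[of y x] yB by (auto simp: insert_commute)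
    have "att y x [x,y]" unfolding att_def using xC that yB by auto
    then have at: "att y (fst (Ap y)) (snd (Ap y))" by (rule Ap)
    define a where "a = fst (Ap y)"
    define w where "w = snd (Ap y)"
    have at': "att y a w" using at unfolding a_def w_def .
    have wne: "w \<noteq> []" using at' unfolding att_def by auto
    have "has_par_walk G (XB - Bs) a x (odd (length w))"
      unfolding has_par_walk_def
    proof (intro exI[of _ "w @ [x]"] conjI)
      show "is_walk G (w @ [x])" unfolding walk_chain using at' att_set[OF at'] that
        by (auto simp: chain_append att_def insert_commute)
      show "3 \<le> length (w @ [x])" using at' unfolding att_def by auto
      show "hd (w @ [x]) = a" using at' wne unfolding att_def by auto
      show "set (butlast (tl (w @ [x]))) \<subseteq> XB - Bs" using at' wne unfolding att_def
        by (simp add: tl_append2 butlast_append)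
    qed auto
    then have "(c (Orig a) \<noteq> c (Orig x)) = odd (length w)"
      using R at' xC that(4) unfolding att_def by blast
    moreover have "odd (length w) = (\<not> odd (length w - 1))" using at' unfolding att_def by auto
    ultimately have "(c (Orig a) \<noteq> odd (length w - 1)) \<noteq> c (Orig x)" using bx1 by metis
    moreover have "col y = (c (Orig a) \<noteq> odd (length w - 1))"
      unfolding col_def a_def w_def using that at by auto
    ultimately show ?thesis unfolding col_def using that by auto
  qed
  have NN1: "col x \<noteq> col y" if "x \<in> XB - Bs" "y \<in> XB - Bs" "{x,y} \<in> snd G" "att y a0 w0" for x y a0 w0
  proof -
    have w0ne: "w0 \<noteq> []" using that(4) unfolding att_def by auto
    have "att x a0 (w0 @ [x])" using that w0ne unfolding att_def
      by (auto simp: chain_append tl_append2 insert_commute)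
    then have atx: "att x (fst (Ap x)) (snd (Ap x))" by (rule Ap)
    have aty: "att y (fst (Ap y)) (snd (Ap y))" using Ap that(4) .
    define a1 where "a1 = fst (Ap y)"
    define w1 where "w1 = snd (Ap y)"
    define a2 where "a2 = fst (Ap x)"
    define w2 where "w2 = snd (Ap x)"
    have at1: "att y a1 w1" using aty unfolding a1_def w1_def .
    have at2: "att x a2 w2" using atx unfolding a2_def w2_def .
    have ne: "w1 \<noteq> []" "w2 \<noteq> []" using at1 at2 unfolding att_def by auto
    have "has_par_walk G (XB - Bs) a1 a2 (odd (length w1 + length w2 - 1))"
      unfolding has_par_walk_def
    proof (intro exI[of _ "w1 @ rev w2"] conjI)
      show "is_walk G (w1 @ rev w2)" unfolding walk_chain using at1 at2 att_set[OF at1] att_set[OF at2] that ne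
        by (auto simp: chain_append chain_rev att_def hd_rev insert_commute)
      show "3 \<le> length (w1 @ rev w2)" using at1 at2 unfolding att_def by auto
      show "hd (w1 @ rev w2) = a1" using at1 ne unfolding att_def by auto
      show "last (w1 @ rev w2) = a2" using at2 ne unfolding att_def by (auto simp: last_rev)
      show "set (butlast (tl (w1 @ rev w2))) \<subseteq> XB - Bs" using at1 at2 ne unfolding att_def
        by (auto simp: tl_append2 butlast_append butlast_rev)
    qed auto
    then have "(c (Orig a1) \<noteq> c (Orig a2)) = odd (length w1 + length w2 - 1)"
      using R at1 at2 unfolding att_def by blast
    moreover have "odd (length w1 + length w2 - 1) = (odd (length w1 - 1) = odd (length w2 - 1))"
      using at1 at2 unfolding att_def by auto
    ultimately have "(c (Orig a2) \<noteq> odd (length w2 - 1)) \<noteq> (c (Orig a1) \<noteq> odd (length w1 - 1))"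
      using bx2 by metis
    moreover have "col y = (c (Orig a1) \<noteq> odd (length w1 - 1))"
      unfolding col_def a1_def w1_def using that at1 by auto
    moreover have "col x = (c (Orig a2) \<noteq> odd (length w2 - 1))"
      unfolding col_def a2_def w2_def using that at2 by auto
    ultimately show ?thesis by simp
  qed
  have NN: "col x \<noteq> col y" if "x \<in> XB - Bs" "y \<in> XB - Bs" "{x,y} \<in> snd G" for x y
  proof (cases "\<exists>a w. att y a w \<or> att x a w")
    case True
    then show ?thesis using NN1[OF that] NN1[of y x] that by (metis insert_commute)
  next
    case False
    then have "col x = f x" "col y = f y" using that unfolding col_def by auto
    then show ?thesis using col that unfolding proper_2col_on_def by auto
  qed
  have "bipartite_on G (fst G - S)"
    unfolding bipartite_on_def
  proof (intro exI[of _ col] ballI impI)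
    fix x y assume x: "x \<in> fst G - S" and y: "y \<in> fst G - S" and e: "{x,y} \<in> snd G"
    show "col x \<noteq> col y"
    proof (cases "x \<in> K")
      case True
      then show ?thesis
      proof (cases "y \<in> K")
        case True then show ?thesis using KK \<open>x \<in> K\<close> x y e by auto
      next
        case False then show ?thesis using KN \<open>x \<in> K\<close> x y e by auto
      qed
    next
      case False
      then show ?thesis
      proof (cases "y \<in> K")
        case True then show ?thesis using KN[of y x] \<open>x \<notin> K\<close> x y e by (auto simp: insert_commute)
      next
        case False then show ?thesis using NN \<open>x \<notin> K\<close> x y e by auto
      qed
    qed
  qed
  then show ?thesis using SsubK unfolding is_oct_def S_def by auto
qed


lemma aux_edge_cases:
  assumes "{x, y} \<in> snd (aux_graph G XB XC f)"
  shows "(\<exists>u w. {x,y} = {Base u, Base w} \<and> u \<in> XB \<and> w \<in> XB \<and> {u, w} \<in> snd G) \<or>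
         (\<exists>u v. {x,y} = {Term v (f u), Base u} \<and> v \<in> XC \<and> u \<in> XB \<and> {u, v} \<in> snd G)"
  using assms unfolding aux_graph_def by auto

lemma orig_edge_inv:
  assumes "{Orig u, Orig v} \<in> snd G'"
  shows "u \<in> K" "v \<in> K" "{u, v} \<in> snd G"
proof -
  obtain a b where "{Orig u, Orig v} = {Orig a, Orig b}" "a \<in> K" "b \<in> K" "{a,b} \<in> snd G"
    using assms unfolding edges_G' by (auto simp: doubleton_eq_iff)
  then show "u \<in> K" "v \<in> K" "{u, v} \<in> snd G" by (auto simp: doubleton_eq_iff insert_commute)
qed

lemma dir1:
  assumes star: "star_property G XB XC f Bs" and minS: "is_min_oct G S"
  shows "\<exists>S2. S2 \<subseteq> K \<and> card S2 \<le> card S \<and> is_oct G' (Orig ` S2)"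
proof -
  have SV: "S \<subseteq> fst G" and bipS: "bipartite_on G (fst G - S)"
    and mn: "\<And>S''. is_oct G S'' \<Longrightarrow> card S \<le> card S''"
    using minS unfolding is_min_oct_def is_oct_def by auto
  obtain c :: "'a \<Rightarrow> bool" where c: "\<forall>u\<in>fst G - S. \<forall>v\<in>fst G - S. {u,v} \<in> snd G \<longrightarrow> c u \<noteq> c v"
    using bipS unfolding bipartite_on_def by blast
  have finS: "finite S" using finite_subset[OF SV finV] .
  have finXC: "finite XC" using finite_subset[OF _ finV] part(1) by blast
  have colf: "\<And>u v. u \<in> XB \<Longrightarrow> v \<in> XB \<Longrightarrow> {u,v} \<in> snd G \<Longrightarrow> f u \<noteq> f v"
    using col unfolding proper_2col_on_def by blast
  define Ga where "Ga = aux_graph G XB XC f"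
  define T where "T = terminals XC"
  have octX: "is_oct G ((S - XB) \<union> XC)"
    unfolding is_oct_def bipartite_on_def
  proof (intro conjI exI[of _ "\<lambda>x. if x \<in> XB then f x else c x"] ballI impI)
    show "S - XB \<union> XC \<subseteq> fst G" using SV part(1) by blast
  next
    fix u v assume u: "u \<in> fst G - (S - XB \<union> XC)" and v: "v \<in> fst G - (S - XB \<union> XC)" and e: "{u,v} \<in> snd G"
    show "(if u \<in> XB then f u else c u) \<noteq> (if v \<in> XB then f v else c v)"
    proof (cases "u \<in> XB")
      case True
      show ?thesis
      proof (cases "v \<in> XB")
        case True then show ?thesis using \<open>u \<in> XB\<close> colf e by simp
      next
        case False
        then have "v \<in> XR" using v part(1) by blast
        then show ?thesis using part(5)[OF \<open>u \<in> XB\<close>] e by blast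
      qed
    next
      case False
      show ?thesis
      proof (cases "v \<in> XB")
        case True
        have "u \<in> XR" using u False part(1) by blast
        then show ?thesis using part(5)[OF True] e by (simp add: insert_commute)
      next
        case False
        then show ?thesis using \<open>u \<notin> XB\<close> u v e c by auto
      qed
    qed
  qed
  have finT: "finite T"
  proof -
    have "T \<subseteq> (\<lambda>(v,i). Term v i) ` (XC \<times> UNIV)" unfolding T_def terminals_def by auto
    moreover have "finite ((\<lambda>(v,i). Term v i) ` (XC \<times> (UNIV :: bool set)))" using finXC by simp
    ultimately show ?thesis by (rule finite_subset)
  qed
  have cXT: "card XC \<le> card T"
  proof -
    have "(\<lambda>v. Term v True) ` XC \<subseteq> T" unfolding T_def terminals_def by auto
    then have "card ((\<lambda>v. Term v True) ` XC) \<le> card T" using finT by (rule card_mono[rotated])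
    moreover have "card ((\<lambda>v. Term v True) ` XC) = card XC" by (rule card_image) (simp add: inj_on_def)
    ultimately show ?thesis by simp
  qed
  have cardSB: "card (S \<inter> XB) \<le> card T"
  proof -
    have "card S \<le> card ((S - XB) \<union> XC)" using mn octX .
    also have "\<dots> \<le> card (S - XB) + card XC" by (rule card_Un_le)
    finally have 1: "card S \<le> card (S - XB) + card XC" .
    have "card S = card (S \<inter> XB) + card (S - XB)"
      using finS card_Un_disjoint[of "S \<inter> XB" "S - XB"] by (metis Int_Diff_Un Int_Diff_disjoint finite_Diff finite_Int)
    then show ?thesis using 1 cXT by linarith
  qed
  define T1 where "T1 = {Term v (c v) | v. v \<in> XC - S}"
  define T2 where "T2 = {Term v (\<not> c v) | v. v \<in> XC - S}"
  define TX where "TX = {Term v i | v i. v \<in> XC \<inter> S}"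
  have partT: "T1 \<union> T2 \<union> {} \<union> TX = T \<and>
        T1 \<inter> T2 = {} \<and> T1 \<inter> {} = {} \<and> T1 \<inter> TX = {} \<and>
        T2 \<inter> {} = {} \<and> T2 \<inter> TX = {} \<and> {} \<inter> TX = {}"
  proof (intro conjI)
    show "T1 \<union> T2 \<union> {} \<union> TX = T"
    proof
      show "T1 \<union> T2 \<union> {} \<union> TX \<subseteq> T" unfolding T1_def T2_def TX_def T_def terminals_def by blast
      show "T \<subseteq> T1 \<union> T2 \<union> {} \<union> TX"
      proof
        fix t assume "t \<in> T"
        then obtain v i where t: "t = Term v i" "v \<in> XC" unfolding T_def terminals_def by blast
        show "t \<in> T1 \<union> T2 \<union> {} \<union> TX"
        proof (cases "v \<in> S")
          case True then show ?thesis unfolding TX_def using t by blast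
        next
          case False
          show ?thesis
          proof (cases "i = c v")
            case True then show ?thesis unfolding T1_def using t False by blast
          next
            case False
            then have "i = (\<not> c v)" by simp
            then show ?thesis unfolding T2_def using t \<open>v \<notin> S\<close> by blast
          qed
        qed
      qed
    qed
  qed (auto simp: T1_def T2_def TX_def)
  define lam where "lam x = (case x of Term v i \<Rightarrow> (c v = i) | Base u \<Rightarrow> (c u \<noteq> f u))" for x
  have lamT1: "\<And>t. t \<in> T1 \<Longrightarrow> lam t" unfolding T1_def lam_def by auto
  have lamT2: "\<And>t. t \<in> T2 \<Longrightarrow> \<not> lam t" unfolding T2_def lam_def by auto
  define W0 where "W0 = fst Ga - TX - Base ` (S \<inter> XB)"
  have step_lam: "lam x = lam y" if "x \<in> W0" "y \<in> W0" "{x,y} \<in> snd Ga" for x y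
  proof -
    from aux_edge_cases[OF that(3)[unfolded Ga_def]]
    show ?thesis
    proof (elim disjE exE conjE)
      fix u w assume h: "{x, y} = {Base u, Base w}" "u \<in> XB" "w \<in> XB" "{u, w} \<in> snd G"
      have "Base u \<in> W0" "Base w \<in> W0" using h(1) that(1,2) by (auto simp: doubleton_eq_iff)
      then have "u \<notin> S" "w \<notin> S" using h(2,3) unfolding W0_def by auto
      then have "c u \<noteq> c w" using c h part(1) by blast
      moreover have "f u \<noteq> f w" using colf h by blast
      ultimately have "lam (Base u) = lam (Base w)" unfolding lam_def by (simp add: bx3)
      then show ?thesis using h(1) by (auto simp: doubleton_eq_iff)
    next
      fix u v assume h: "{x, y} = {Term v (f u), Base u}" "v \<in> XC" "u \<in> XB" "{u, v} \<in> snd G"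
      have "Term v (f u) \<in> W0" "Base u \<in> W0" using h(1) that(1,2) by (auto simp: doubleton_eq_iff)
      then have "v \<notin> S" "u \<notin> S" using h(2,3) unfolding W0_def TX_def by auto
      then have cuv: "c u \<noteq> c v" using c h part(1) by blast
      have "lam (Term v (f u)) = lam (Base u)" unfolding lam_def using bx4[OF cuv, of "f u"] by simp
      then show ?thesis using h(1) by (auto simp: doubleton_eq_iff)
    qed
  qed
  have conn_lam: "lam a = lam b" if "connected_in Ga W0 a b" for a b
  proof -
    have "(\<lambda>x y. x \<in> W0 \<and> y \<in> W0 \<and> {x, y} \<in> snd Ga)\<^sup>*\<^sup>* a b"
      using that unfolding connected_in_def by blast
    then show ?thesis
      by (induction rule: rtranclp_induct) (auto dest: step_lam)
  qed
  have sep0: "separates3 Ga (S \<inter> XB) T1 T2 {} TX"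
    unfolding separates3_def Let_def
  proof (intro ballI impI)
    fix A B a b assume AB: "A \<in> {T1, T2, {}}" "B \<in> {T1, T2, {}}" "A \<noteq> B" and ab: "a \<in> A" "b \<in> B"
    show "\<not> connected_in Ga (fst Ga - TX - Base ` (S \<inter> XB)) a b"
    proof
      assume "connected_in Ga (fst Ga - TX - Base ` (S \<inter> XB)) a b"
      then have "lam a = lam b" using conn_lam unfolding W0_def by blast
      moreover have "(A = T1 \<and> B = T2) \<or> (A = T2 \<and> B = T1)" using AB ab by auto
      ultimately show False using lamT1 lamT2 ab by auto
    qed
  qed
  have exS: "\<exists>S. S \<subseteq> XB \<and> card S \<le> card T \<and> separates3 Ga S T1 T2 {} TX"
    by (rule exI[of _ "S \<inter> XB"]) (use sep0 cardSB in simp)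
  note H = star[unfolded star_property_def Let_def, THEN spec[of _ T1], THEN spec[of _ T2],
      THEN spec[of _ "{}"], THEN spec[of _ TX]]
  note H2 = mp[OF mp[OF H partT[unfolded T_def]] exS[unfolded Ga_def T_def]]
  obtain Ss where Ss: "Ss \<subseteq> Bs" "separates3 Ga Ss T1 T2 {} TX"
      "\<And>S'. S' \<subseteq> XB \<Longrightarrow> separates3 Ga S' T1 T2 {} TX \<Longrightarrow> card Ss \<le> card S'"
    using H2 unfolding Ga_def[symmetric] by blast
  have cSs: "card Ss \<le> card (S \<inter> XB)" using Ss(3)[OF _ sep0] by simp
  define S2 where "S2 = (S - XB) \<union> Ss"
  have S2K: "S2 \<subseteq> K" unfolding S2_def using SV Ss(1) BsXB part(1) by blast
  have cS2: "card S2 \<le> card S"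
  proof -
    have "card S2 \<le> card (S - XB) + card Ss" unfolding S2_def by (rule card_Un_le)
    moreover have "card S = card (S \<inter> XB) + card (S - XB)"
      using finS card_Un_disjoint[of "S \<inter> XB" "S - XB"] by (metis Int_Diff_Un Int_Diff_disjoint finite_Diff finite_Int)
    ultimately show ?thesis using cSs by linarith
  qed
  define Ws where "Ws = fst Ga - TX - Base ` Ss"
  let ?R = "\<lambda>x y. x \<in> Ws \<and> y \<in> Ws \<and> {x, y} \<in> snd Ga"
  have sepS: "\<not> connected_in Ga Ws a b" if "a \<in> T1" "b \<in> T2" for a b
  proof -
    have "T1 \<noteq> T2" using that lamT1 lamT2 by blast
    have sepAll: "\<forall>A\<in>{T1, T2, {}}. \<forall>B\<in>{T1, T2, {}}. A \<noteq> B \<longrightarrow> (\<forall>a\<in>A. \<forall>b\<in>B. \<not> connected_in Ga Ws a b)"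
      using Ss(2) unfolding separates3_def Let_def Ws_def by simp
    show ?thesis by (rule sepAll[rule_format, of T1 T2 a b]) (use that \<open>T1 \<noteq> T2\<close> in simp_all)
  qed
  have ext: "connected_in Ga Ws t y" if "connected_in Ga Ws t x" "x \<in> Ws" "y \<in> Ws" "{x,y} \<in> snd Ga" for t x y
    using that unfolding connected_in_def by (auto intro: rtranclp.rtrancl_into_rtrancl)
  have BaseW: "Base u \<in> Ws" if "u \<in> XB" "u \<notin> Ss" for u
    using that unfolding Ws_def Ga_def aux_graph_def TX_def by auto
  have TermW: "Term v i \<in> Ws" if "v \<in> XC" "v \<notin> S" for v i
    using that unfolding Ws_def Ga_def aux_graph_def TX_def by auto
  have eBB: "{Base u, Base w} \<in> snd Ga" if "u \<in> XB" "w \<in> XB" "{u,w} \<in> snd G" for u w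
    using that unfolding Ga_def aux_graph_def by auto
  have eTB: "{Term v (f u), Base u} \<in> snd Ga" if "v \<in> XC" "u \<in> XB" "{u,v} \<in> snd G" for u v
    using that unfolding Ga_def aux_graph_def by auto
  define c2 where "c2 x = (if x \<in> XB then (if \<exists>t\<in>T1. connected_in Ga Ws t (Base x) then \<not> f x else f x) else c x)" for x
  have BC: "c2 x \<noteq> c2 y" if "x \<in> XB" "x \<notin> Ss" "y \<in> XC" "y \<notin> S" "{x,y} \<in> snd G" for x y
  proof -
    have W: "Base x \<in> Ws" "Term y (f x) \<in> Ws" using BaseW TermW that by auto
    have e: "{Term y (f x), Base x} \<in> snd Ga" using eTB that by auto
    have yx: "y \<notin> XB" using that part(2) by blast
    show ?thesis
    proof (cases "c y = f x")
      case True
      then have "Term y (f x) \<in> T1" unfolding T1_def using that by auto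
      moreover have "connected_in Ga Ws (Term y (f x)) (Base x)"
        using W e unfolding connected_in_def by auto
      ultimately have "c2 x = (\<not> f x)" unfolding c2_def using that by auto
      then show ?thesis using True yx unfolding c2_def by auto
    next
      case False
      then have T2: "Term y (f x) \<in> T2" unfolding T2_def using that by auto
      have "\<not> (\<exists>t\<in>T1. connected_in Ga Ws t (Base x))"
      proof
        assume "\<exists>t\<in>T1. connected_in Ga Ws t (Base x)"
        then obtain t where "t \<in> T1" "connected_in Ga Ws t (Base x)" by blast
        moreover have "connected_in Ga Ws t (Term y (f x))"
          using ext[OF \<open>connected_in Ga Ws t (Base x)\<close> W(1) W(2)] e by (simp add: insert_commute)
        ultimately show False using sepS T2 by blast
      qed
      then have "c2 x = f x" unfolding c2_def using that by auto
      then show ?thesis using False yx unfolding c2_def by auto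
    qed
  qed
  have P2: "c2 x \<noteq> c2 y" if "x \<in> fst G - S2" "y \<in> fst G - S2" "{x,y} \<in> snd G" for x y
  proof (cases "x \<in> XB")
    case True
    show ?thesis
    proof (cases "y \<in> XB")
      case True
      have xs: "x \<notin> Ss" "y \<notin> Ss" using that unfolding S2_def by auto
      have W: "Base x \<in> Ws" "Base y \<in> Ws" using BaseW xs \<open>x \<in> XB\<close> True by auto
      have e1: "{Base x, Base y} \<in> snd Ga" using eBB \<open>x \<in> XB\<close> True that(3) by auto
      have e2: "{Base y, Base x} \<in> snd Ga" using e1 by (simp add: insert_commute)
      have "(\<exists>t\<in>T1. connected_in Ga Ws t (Base x)) = (\<exists>t\<in>T1. connected_in Ga Ws t (Base y))"
        using ext[OF _ W(1) W(2) e1] ext[OF _ W(2) W(1) e2] by blast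
      then show ?thesis using colf[OF \<open>x \<in> XB\<close> True that(3)] \<open>x \<in> XB\<close> True unfolding c2_def by auto
    next
      case False
      have "y \<notin> XR" using part(5)[OF True] that(3) by blast
      then have "y \<in> XC" using that(2) part(1) False by blast
      moreover have "y \<notin> S" "x \<notin> Ss" using that False unfolding S2_def by auto
      ultimately show ?thesis using BC True that(3) by blast
    qed
  next
    case False
    show ?thesis
    proof (cases "y \<in> XB")
      case True
      have "x \<notin> XR" using part(5)[OF True] that(3) by (auto simp: insert_commute)
      then have "x \<in> XC" using that(1) part(1) False by blast
      moreover have "x \<notin> S" "y \<notin> Ss" using that False True unfolding S2_def by auto
      ultimately show ?thesis using BC[of y x] True that(3) by (auto simp: insert_commute)
    next
      case False
      then have "x \<in> fst G - S" "y \<in> fst G - S" using that \<open>x \<notin> XB\<close> unfolding S2_def by auto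
      then show ?thesis using c that(3) False \<open>x \<notin> XB\<close> unfolding c2_def by auto
    qed
  qed
  have P2': "\<forall>u\<in>fst G - S2. \<forall>v\<in>fst G - S2. {u,v} \<in> snd G \<longrightarrow> c2 u \<noteq> c2 v" using P2 by blast
  define dz where "dz x = (case x of Orig u \<Rightarrow> c2 u | Gad P b k i \<Rightarrow> False)" for x
  have "bipartite_on G' (fst G' - Orig ` S2)"
  proof (rule GL[where dz = dz and rc = "\<lambda>Q b. True"])
    fix x y assume e: "{x, y} \<in> snd G'" and xy: "x \<in> fst G' - Orig ` S2" "y \<in> fst G' - Orig ` S2"
      and nx: "\<not> isrc (\<lambda>Q b. True) x" and ny: "\<not> isrc (\<lambda>Q b. True) y"
    obtain u v where uv: "x = Orig u" "y = Orig v" using nx ny unfolding isrc_def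
      by (cases x; cases y) auto
    have "u \<in> K" "v \<in> K" "{u,v} \<in> snd G" using orig_edge_inv e uv by auto
    moreover have "u \<notin> S2" "v \<notin> S2" using xy uv by auto
    ultimately show "dz x \<noteq> dz y" using P2 uv unfolding dz_def by auto
  next
    fix Q b assume gQ: "gn Q b" and W: "Orig (pfst Q) \<in> fst G' - Orig ` S2" "Orig (psnd Q) \<in> fst G' - Orig ` S2"
    obtain u v where uv: "Q = {u, v}" "has_par_walk G (XB - Bs) u v b"
      using gQ unfolding gadget_needed_def by blast
    have e: "{pfst Q, psnd Q} = {u, v}" using gn_facts(1)[OF gQ] uv(1) by simp
    have pn: "pfst Q \<notin> S2" "psnd Q \<notin> S2" using W by auto
    have pK: "pfst Q \<in> K" "psnd Q \<in> K" using gn_K[OF gQ] .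
    have uvn: "u \<in> fst G - S2" "v \<in> fst G - S2" using e pn pK by (auto simp: doubleton_eq_iff)
    obtain xs where xs: "is_walk G xs" "hd xs = u" "last xs = v" "set (butlast (tl xs)) \<subseteq> XB - Bs"
       "odd (length xs - 1) = b"
      using uv(2) unfolding has_par_walk_def by blast
    have ne: "xs \<noteq> []" and ch: "chain (snd G) xs" and sG: "set xs \<subseteq> fst G" using xs(1) unfolding walk_chain by auto
    have "set (butlast (tl xs)) \<subseteq> fst G - S2" using xs(4) S2K part(1) by auto
    moreover have "set xs \<subseteq> insert (hd xs) (insert (last xs) (set (butlast (tl xs))))" using set_hd_last[OF ne] .
    ultimately have "set xs \<subseteq> fst G - S2" using uvn xs(2,3) by blast
    then have "(c2 u \<noteq> c2 v) = b" using chain_parity[OF ch _ P2' ne] xs(2,3,5) by simp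
    then show "(dz (Orig (pfst Q)) \<noteq> dz (Orig (psnd Q))) = b"
      using e unfolding dz_def by (auto simp: doubleton_eq_iff)
  qed
  moreover have "Orig ` S2 \<subseteq> fst G'" using S2K orig_in_V' by auto
  ultimately have "is_oct G' (Orig ` S2)" unfolding is_oct_def by auto
  then show ?thesis using S2K cS2 by blast
qed

end


theorem lemma5p3:
  fixes G :: "'a graph" and XB XC XR Bs :: "'a set" and f :: "'a \<Rightarrow> bool"
    and S' :: "'a rv set"
  assumes "graph G"
    and "is_occ G XB XC XR"
    and "proper_2col_on G XB f"
    and "Bs \<subseteq> XB"
    and "star_property G XB XC f Bs"
    and "is_min_oct (reduced_graph G XB XC Bs) S'"
  shows "S' \<subseteq> Orig ` fst G \<inter> fst (reduced_graph G XB XC Bs)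
         \<and> is_min_oct G (Orig -` S')"
proof -
  interpret occ_setting G XB XC XR Bs f using assms(1-4) by unfold_locales
  have SK: "S' \<subseteq> Orig ` K" using no_gadget[OF assms(6)] .
  have octS': "is_oct G' S'" and mnS': "\<And>S''. is_oct G' S'' \<Longrightarrow> card S' \<le> card S''"
    using assms(6) unfolding is_min_oct_def by auto
  have oct: "is_oct G (Orig -` S')" using dir2[OF octS' SK] .
  have "\<exists>n. \<exists>S. is_oct G S \<and> card S = n"
    by (rule exI, rule exI[of _ "fst G"]) (simp add: is_oct_def bipartite_on_def)
  then obtain n where n1: "\<exists>S. is_oct G S \<and> card S = n" and n2: "\<And>m. m < n \<Longrightarrow> \<not> (\<exists>S. is_oct G S \<and> card S = m)"
    unfolding exists_least_iff[of "\<lambda>n. \<exists>S. is_oct G S \<and> card S = n"] by blast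
  obtain S0 where S0: "is_oct G S0" "card S0 = n" using n1 by blast
  have minS0: "is_min_oct G S0" unfolding is_min_oct_def
    using S0 n2 by (metis not_le)
  obtain S2 where S2: "S2 \<subseteq> K" "card S2 \<le> card S0" "is_oct G' (Orig ` S2)"
    using dir1[OF assms(5) minS0] by blast
  have "card S' \<le> card (Orig ` S2)" using mnS'[OF S2(3)] .
  also have "\<dots> = card S2" by (rule card_image) (simp add: inj_on_def)
  finally have cS': "card S' \<le> card S0" using S2(2) by linarith
  have "S' = Orig ` (Orig -` S')" using SK by auto
  then have ceq: "card (Orig -` S') = card S'"
    by (metis card_image inj_on_def rv.inject(1))
  have "is_min_oct G (Orig -` S')"
    unfolding is_min_oct_def
  proof (intro conjI allI impI)
    show "is_oct G (Orig -` S')" by (rule oct)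
    fix S'' assume "is_oct G S''"
    then have "card S0 \<le> card S''" using minS0 unfolding is_min_oct_def by blast
    then show "card (Orig -` S') \<le> card S''" using ceq cS' by linarith
  qed
  moreover have "S' \<subseteq> Orig ` fst G \<inter> fst G'" using SK octS' unfolding is_oct_def by auto
  ultimately show ?thesis by blast
qed

end
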